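(* The lattice of subvarieties of the monoid variety $\mathbf M(xyx)\vee\mathbf M_\gamma(xx^+yy^+)$ is not modular.
   Context: Words are elements of the free monoid $\mathfrak X^\ast$ over a countably infinite alphabet. For a set $W$ of words, $M(W)$ is the Rees quotient of $\mathfrak X^\ast$ by the ideal of all words that are not factors of any word in $W$; $\mathbf M(xyx)$ is the monoid variety generated by $M(\{xyx\})$. A letter is simple in a word if it occurs exactly once. The congruence $\gamma$: $\mathbf u\mathrel\gamma\mathbf v$ iff $\mathbf u,\mathbf v$ have the same simple letters and $\mathbf u$ is obtained from $\mathbf v$ by changing individual exponents of letters ($\mathbf u=x_1^{e_1}\cdots x_r^{e_r}$, $\mathbf v=x_1^{f_1}\cdots x_r^{f_r}$, $e_i,f_i\ge1$). For $\gamma$-classes, $\mathtt v\le\mathtt u$ if $\mathtt u=\mathtt p\mathtt v\mathtt s$ for $\gamma$-classes $\mathtt p,\mathtt s$; for a set $\mathtt W$ of $\gamma$-classes, $M_\gamma(\mathtt W)$ is the Rees quotient of $\mathfrak X^\ast/\gamma$ by the ideal of $\gamma$-classes not $\le$ any member of $\mathtt W$. $xx^+yy^+$ is the $\gamma$-class of $x^2y^2$, and $\mathbf M_\gamma(xx^+yy^+)$ is the monoid variety generated by $M_\gamma(\{xx^+yy^+\})$. $\vee$ denotes join of varieties. *)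

theory Defs
  imports Main
begin

type_synonym word = "nat list"

definition factor :: "word \<Rightarrow> word \<Rightarrow> bool" where
  "factor v u \<longleftrightarrow> (\<exists>p s. u = p @ v @ s)"

definition subst :: "(nat \<Rightarrow> word) \<Rightarrow> word \<Rightarrow> word" where
  "subst \<sigma> w = concat (map \<sigma> w)"

type_synonym 'a monoid_str = "'a set \<times> ('a \<Rightarrow> 'a \<Rightarrow> 'a) \<times> 'a"

definition eval_word :: "'a monoid_str \<Rightarrow> (nat \<Rightarrow> 'a) \<Rightarrow> word \<Rightarrow> 'a" where
  "eval_word M \<phi> w = foldr (\<lambda>a r. (fst (snd M)) (\<phi> a) r) w (snd (snd M))"

definition sat :: "'a monoid_str \<Rightarrow> word \<Rightarrow> word \<Rightarrow> bool" where
  "sat M u v \<longleftrightarrow> (\<forall>\<phi>. (\<forall>i. \<phi> i \<in> fst M) \<longrightarrow> eval_word M \<phi> u = eval_word M \<phi> v)"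

definition identities :: "'a monoid_str \<Rightarrow> (word \<times> word) set" where
  "identities M = {(u, v). sat M u v}"

text \<open>Rees quotient M(W): factors of words in W, plus zero (None).\<close>
definition M_words :: "word set \<Rightarrow> word option monoid_str" where
  "M_words W =
    ({None} \<union> Some ` {w. \<exists>u\<in>W. factor w u},
     (\<lambda>a b. case (a, b) of
        (Some u, Some v) \<Rightarrow> (if \<exists>w\<in>W. factor (u @ v) w then Some (u @ v) else None)
      | _ \<Rightarrow> None),
     Some [])"

definition simple_letters :: "word \<Rightarrow> nat set" where
  "simple_letters w = {x. count_list w x = 1}"

definition gamma :: "word \<Rightarrow> word \<Rightarrow> bool" where
  "gamma u v \<longleftrightarrow> simple_letters u = simple_letters v \<and>
     (\<exists>xs es fs. length es = length xs \<and> length fs = length xs \<and>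
        (\<forall>e\<in>set es. 1 \<le> e) \<and> (\<forall>f\<in>set fs. 1 \<le> f) \<and>
        u = concat (map (\<lambda>(e, x). replicate e x) (zip es xs)) \<and>
        v = concat (map (\<lambda>(f, x). replicate f x) (zip fs xs)))"

definition gclass :: "word \<Rightarrow> word set" where
  "gclass w = {v. gamma w v}"

definition gle :: "word \<Rightarrow> word \<Rightarrow> bool" where
  "gle v u \<longleftrightarrow> (\<exists>p s. gclass u = gclass (p @ v @ s))"

text \<open>Rees quotient M_gamma(W) of the free monoid modulo gamma, W given by
  representatives of the gamma-classes; elements are gamma-classes (Some) and zero (None).\<close>
definition M_gamma :: "word set \<Rightarrow> word set option monoid_str" where
  "M_gamma W =
    ({None} \<union> Some ` {gclass w | w. \<exists>u\<in>W. gle w u},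
     (\<lambda>a b. case (a, b) of
        (Some A, Some B) \<Rightarrow>
          (let w = (SOME x. x \<in> A) @ (SOME y. y \<in> B) in
           if \<exists>u\<in>W. gle w u then Some (gclass w) else None)
      | _ \<Rightarrow> None),
     Some (gclass []))"

text \<open>By Birkhoff, subvarieties of a monoid variety V correspond to equational theories
  containing the identities of V, with the order reversed.\<close>
definition eq_theory :: "(word \<times> word) set \<Rightarrow> bool" where
  "eq_theory T \<longleftrightarrow> equiv UNIV T \<and>
     (\<forall>u v p s. (u, v) \<in> T \<longrightarrow> (p @ u @ s, p @ v @ s) \<in> T) \<and>
     (\<forall>u v \<sigma>. (u, v) \<in> T \<longrightarrow> (subst \<sigma> u, subst \<sigma> v) \<in> T)"

definition subvarieties :: "(word \<times> word) set \<Rightarrow> (word \<times> word) set set" where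
  "subvarieties IdV = {T. eq_theory T \<and> IdV \<subseteq> T}"

definition var_le :: "(word \<times> word) set \<Rightarrow> (word \<times> word) set \<Rightarrow> bool" where
  "var_le T1 T2 \<longleftrightarrow> T2 \<subseteq> T1"

definition is_lub_in :: "'a set \<Rightarrow> ('a \<Rightarrow> 'a \<Rightarrow> bool) \<Rightarrow> 'a \<Rightarrow> 'a \<Rightarrow> 'a \<Rightarrow> bool" where
  "is_lub_in L le a b s \<longleftrightarrow> s \<in> L \<and> le a s \<and> le b s \<and> (\<forall>z\<in>L. le a z \<and> le b z \<longrightarrow> le s z)"

definition is_glb_in :: "'a set \<Rightarrow> ('a \<Rightarrow> 'a \<Rightarrow> bool) \<Rightarrow> 'a \<Rightarrow> 'a \<Rightarrow> 'a \<Rightarrow> bool" where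
  "is_glb_in L le a b m \<longleftrightarrow> m \<in> L \<and> le m a \<and> le m b \<and> (\<forall>z\<in>L. le z a \<and> le z b \<longrightarrow> le z m)"

definition modular_on :: "'a set \<Rightarrow> ('a \<Rightarrow> 'a \<Rightarrow> bool) \<Rightarrow> bool" where
  "modular_on L le \<longleftrightarrow> (\<forall>a\<in>L. \<forall>b\<in>L. \<forall>c\<in>L. le a c \<longrightarrow>
     (\<forall>m j j' m'. is_glb_in L le b c m \<and> is_lub_in L le a m j \<and>
        is_lub_in L le a b j' \<and> is_glb_in L le j' c m' \<longrightarrow> j = m'))"

text \<open>x = letter 0, y = letter 1.\<close>
definition M_xyx :: "word option monoid_str" where
  "M_xyx = M_words {[0, 1, 0]}"

definition M_gamma_xxyy :: "word set option monoid_str" where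
  "M_gamma_xxyy = M_gamma {[0, 0, 1, 1]}"

definition Id_join :: "(word \<times> word) set" where
  "Id_join = identities M_xyx \<inter> identities M_gamma_xxyy"

end

theory Submission
  imports Defs
begin


definition mmul :: "'a monoid_str \<Rightarrow> 'a \<Rightarrow> 'a \<Rightarrow> 'a" where "mmul M = fst (snd M)"
definition munit :: "'a monoid_str \<Rightarrow> 'a" where "munit M = snd (snd M)"

definition monoid_ok :: "'a monoid_str \<Rightarrow> bool" where
  "monoid_ok M \<longleftrightarrow> munit M \<in> fst M \<and> (\<forall>a\<in>fst M. \<forall>b\<in>fst M. mmul M a b \<in> fst M) \<and>
    (\<forall>a\<in>fst M. \<forall>b\<in>fst M. \<forall>c\<in>fst M. mmul M (mmul M a b) c = mmul M a (mmul M b c)) \<and>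
    (\<forall>a\<in>fst M. mmul M (munit M) a = a \<and> mmul M a (munit M) = a)"

lemma eval_Nil[simp]: "eval_word M \<phi> [] = munit M"
  by (simp add: eval_word_def munit_def)

lemma eval_Cons[simp]: "eval_word M \<phi> (a # u) = mmul M (\<phi> a) (eval_word M \<phi> u)"
  by (simp add: eval_word_def mmul_def)

lemma eval_cong: "(\<And>i. i \<in> set u \<Longrightarrow> \<phi> i = \<psi> i) \<Longrightarrow> eval_word M \<phi> u = eval_word M \<psi> u"
  by (induction u) auto

lemma eval_in:
  assumes "monoid_ok M" "\<forall>i. \<phi> i \<in> fst M"
  shows "eval_word M \<phi> u \<in> fst M"
proof (induction u)
  case Nil
  then show ?case using assms(1) by (simp add: monoid_ok_def)
next
  case (Cons a u)
  have "\<forall>a\<in>fst M. \<forall>b\<in>fst M. mmul M a b \<in> fst M" using assms(1) by (simp add: monoid_ok_def)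
  then show ?case using Cons assms(2) by simp
qed

lemma eval_append:
  assumes "monoid_ok M" "\<forall>i. \<phi> i \<in> fst M"
  shows "eval_word M \<phi> (u @ v) = mmul M (eval_word M \<phi> u) (eval_word M \<phi> v)"
proof (induction u)
  case Nil
  have "\<forall>a\<in>fst M. mmul M (munit M) a = a" using assms(1) by (simp add: monoid_ok_def)
  then show ?case using eval_in[OF assms] by simp
next
  case (Cons a u)
  have as: "\<forall>a\<in>fst M. \<forall>b\<in>fst M. \<forall>c\<in>fst M. mmul M (mmul M a b) c = mmul M a (mmul M b c)"
    using assms(1) by (simp add: monoid_ok_def)
  show ?case using Cons as eval_in[OF assms] assms(2) by simp
qed

lemma eval_subst:
  assumes "monoid_ok M" "\<forall>i. \<phi> i \<in> fst M"
  shows "eval_word M \<phi> (subst \<sigma> u) = eval_word M (\<lambda>i. eval_word M \<phi> (\<sigma> i)) u"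
proof (induction u)
  case Nil
  then show ?case by (simp add: subst_def)
next
  case (Cons a u)
  have "subst \<sigma> (a # u) = \<sigma> a @ subst \<sigma> u" by (simp add: subst_def)
  then show ?case using Cons eval_append[OF assms] by simp
qed

lemma identities_eq_theory:
  assumes "monoid_ok M"
  shows "eq_theory (identities M)"
proof -
  have e: "equiv UNIV (identities M)"
    unfolding equiv_def refl_on_def sym_def trans_def identities_def sat_def by auto
  have c: "(p @ u @ s, p @ v @ s) \<in> identities M" if "(u, v) \<in> identities M" for u v p s
    using that eval_append[OF assms] unfolding identities_def sat_def by auto
  have s: "(subst \<sigma> u, subst \<sigma> v) \<in> identities M" if "(u, v) \<in> identities M" for u v \<sigma>
  proof -
    { fix \<phi> :: "nat \<Rightarrow> _" assume ph: "\<forall>i. \<phi> i \<in> fst M"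
      have ps: "\<forall>i. eval_word M \<phi> (\<sigma> i) \<in> fst M" using eval_in[OF assms ph] by auto
      have "eval_word M \<phi> (subst \<sigma> u) = eval_word M \<phi> (subst \<sigma> v)"
        using that ps unfolding eval_subst[OF assms ph] identities_def sat_def by auto }
    then show ?thesis unfolding identities_def sat_def by auto
  qed
  show ?thesis using e c s unfolding eq_theory_def by blast
qed

lemma eq_theory_Inter:
  assumes "\<forall>T\<in>F. eq_theory T"
  shows "eq_theory (\<Inter>F)"
proof -
  have E: "equiv UNIV T" "\<And>u v p s. (u, v) \<in> T \<Longrightarrow> (p @ u @ s, p @ v @ s) \<in> T"
     "\<And>u v \<sigma>. (u, v) \<in> T \<Longrightarrow> (subst \<sigma> u, subst \<sigma> v) \<in> T" if "T \<in> F" for T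
    using assms that unfolding eq_theory_def by auto
  have r: "refl_on UNIV (\<Inter>F)"
  proof (rule refl_onI)
    fix x :: word show "(x, x) \<in> \<Inter>F"
    proof
      fix T assume "T \<in> F" then show "(x, x) \<in> T" using E(1) by (simp add: equiv_def refl_on_def)
    qed
  qed
  have s: "sym (\<Inter>F)"
  proof (rule symI)
    fix x y assume xy: "(x, y) \<in> \<Inter>F"
    show "(y, x) \<in> \<Inter>F"
    proof
      fix T assume T: "T \<in> F" then have "(x, y) \<in> T" using xy by blast
      then show "(y, x) \<in> T" using E(1)[OF T] by (meson equiv_def symD)
    qed
  qed
  have t: "trans (\<Inter>F)"
  proof (rule transI)
    fix x y z assume xy: "(x, y) \<in> \<Inter>F" and yz: "(y, z) \<in> \<Inter>F"
    show "(x, z) \<in> \<Inter>F"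
    proof
      fix T assume T: "T \<in> F" then have "(x, y) \<in> T" "(y, z) \<in> T" using xy yz by blast+
      then show "(x, z) \<in> T" using E(1)[OF T] by (meson equiv_def transD)
    qed
  qed
  have c: "(p @ u @ s, p @ v @ s) \<in> \<Inter>F" if "(u, v) \<in> \<Inter>F" for u v p s
  proof
    fix T assume T: "T \<in> F" then show "(p @ u @ s, p @ v @ s) \<in> T" using E(2)[OF T] that by blast
  qed
  have d: "(subst \<sigma> u, subst \<sigma> v) \<in> \<Inter>F" if "(u, v) \<in> \<Inter>F" for u v \<sigma>
  proof
    fix T assume T: "T \<in> F" then show "(subst \<sigma> u, subst \<sigma> v) \<in> T" using E(3)[OF T] that by blast
  qed
  show ?thesis unfolding eq_theory_def equiv_def using r s t c d by simp
qed

lemma eq_theory_Int: "eq_theory A \<Longrightarrow> eq_theory B \<Longrightarrow> eq_theory (A \<inter> B)"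
  using eq_theory_Inter[of "{A, B}"] by auto

definition cl :: "(word \<times> word) set \<Rightarrow> (word \<times> word) set" where
  "cl S = \<Inter>{T. eq_theory T \<and> S \<subseteq> T}"

lemma cl_eq: "eq_theory (cl S)"
  unfolding cl_def by (rule eq_theory_Inter) auto

lemma cl_sup: "S \<subseteq> cl S"
  unfolding cl_def by auto

lemma cl_least: "eq_theory T \<Longrightarrow> S \<subseteq> T \<Longrightarrow> cl S \<subseteq> T"
  unfolding cl_def by auto

lemma eqt_trans: "eq_theory T \<Longrightarrow> (u, v) \<in> T \<Longrightarrow> (v, w) \<in> T \<Longrightarrow> (u, w) \<in> T"
  unfolding eq_theory_def equiv_def trans_def by blast

lemma eqt_ctx: "eq_theory T \<Longrightarrow> (u, v) \<in> T \<Longrightarrow> (p @ u @ s, p @ v @ s) \<in> T"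
  unfolding eq_theory_def by blast

lemma eqt_subst: "eq_theory T \<Longrightarrow> (u, v) \<in> T \<Longrightarrow> (subst \<sigma> u, subst \<sigma> v) \<in> T"
  unfolding eq_theory_def by blast

lemma sat_hom:
  assumes ok: "munit M \<in> fst M" "\<forall>a\<in>fst M. \<forall>b\<in>fst M. mmul M a b \<in> fst M"
    and hom: "\<forall>a\<in>fst M. \<forall>b\<in>fst M. h (mmul M a b) = mmul M' (h a) (h b)"
    and hu: "h (munit M) = munit M'"
    and surj: "\<forall>b\<in>fst M'. \<exists>a\<in>fst M. h a = b"
    and s: "sat M u v"
  shows "sat M' u v"
  unfolding sat_def
proof (intro allI impI)
  fix \<phi>' :: "nat \<Rightarrow> _" assume ph': "\<forall>i. \<phi>' i \<in> fst M'"
  define \<phi> :: "nat \<Rightarrow> _" where "\<phi> i = (SOME a. a \<in> fst M \<and> h a = \<phi>' i)" for i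
  have ph: "\<phi> i \<in> fst M \<and> h (\<phi> i) = \<phi>' i" for i
    unfolding \<phi>_def using surj ph' by (metis (mono_tags, lifting) someI_ex)
  have ev: "eval_word M \<phi> w \<in> fst M \<and> h (eval_word M \<phi> w) = eval_word M' \<phi>' w" for w
  proof (induction w)
    case Nil
    then show ?case using ok hu by simp
  next
    case (Cons a w)
    then show ?case using ok(2) hom ph by simp
  qed
  have "eval_word M \<phi> u = eval_word M \<phi> v" using s ph unfolding sat_def by auto
  then show "eval_word M' \<phi>' u = eval_word M' \<phi>' v" using ev by metis
qed



lemma factor_appendD: "factor (u @ v) w \<Longrightarrow> factor u w \<and> factor v w"
  unfolding factor_def by (metis append.assoc)

lemma factor_Nil: "factor [] w"
  unfolding factor_def by auto

lemma factor_010: "factor w [0,1,0] \<longleftrightarrow> w \<in> {[],[0],[1],[0,1],[1,0],[0,1,0::nat]}"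
proof
  assume "factor w [0,1,0]"
  then obtain p s where e: "[0,1,0] = p @ w @ s" unfolding factor_def by blast
  then show "w \<in> {[],[0],[1],[0,1],[1,0],[0,1,0::nat]}"
    by (auto simp: Cons_eq_append_conv append_eq_Cons_conv)
next
  assume "w \<in> {[],[0],[1],[0,1],[1,0],[0,1,0::nat]}"
  then show "factor w [0,1,0]" unfolding factor_def
    apply auto
    apply (rule exI[of _ "[]"], force)
    apply (rule exI[of _ "[]"], force)
    apply (rule exI[of _ "[0]"], force)
    apply (rule exI[of _ "[]"], force)
    apply (rule exI[of _ "[0]"], force)
    apply (rule exI[of _ "[]"], force)
    done
qed

lemma mwords_ok: "W \<noteq> {} \<Longrightarrow> monoid_ok (M_words W)"
  unfolding monoid_ok_def mmul_def munit_def M_words_def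
  apply (intro conjI)
  using factor_Nil apply auto[1]
  apply (auto split: option.splits)[1]
  subgoal
    apply (auto split: option.splits dest: factor_appendD)
       apply (metis append.assoc factor_appendD)+
    done
  apply (auto split: option.splits)
  done

lemma Mxyx_ok: "monoid_ok M_xyx"
  unfolding M_xyx_def by (rule mwords_ok) simp

lemma Mxyx_carrier: "fst M_xyx = {None, Some [], Some [0], Some [1], Some [0,1], Some [1,0], Some [0,1,0]}"
  unfolding M_xyx_def M_words_def using factor_010 by auto

lemma Mxyx_mul: "mmul M_xyx a b = (case (a, b) of (Some u, Some v) \<Rightarrow>
   (if u @ v \<in> {[],[0],[1],[0,1],[1,0],[0,1,0::nat]} then Some (u @ v) else None) | _ \<Rightarrow> None)"
  unfolding M_xyx_def M_words_def mmul_def using factor_010 by (auto split: option.splits)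

lemma Mxyx_unit: "munit M_xyx = Some []"
  unfolding M_xyx_def M_words_def munit_def by simp

definition G2 :: "(nat \<times> nat) option monoid_str" where
  "G2 = ({None} \<union> Some ` ({0,1,2} \<times> {0,1,2}),
         (\<lambda>a b. case (a, b) of
            (Some (i, j), Some (k, l)) \<Rightarrow> (if j = 0 \<or> k = 0 then Some (min 2 (i + k), min 2 (j + l)) else None)
          | _ \<Rightarrow> None),
         Some (0, 0))"

lemma G2_mul: "mmul G2 a b = (case (a, b) of
            (Some (i, j), Some (k, l)) \<Rightarrow> (if j = 0 \<or> k = 0 then Some (min 2 (i + k), min 2 (j + l)) else None)
          | _ \<Rightarrow> None)"
  unfolding G2_def mmul_def by simp

lemma G2_unit: "munit G2 = Some (0, 0)"
  unfolding G2_def munit_def by simp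

lemma G2_carrier: "fst G2 = {None, Some (0,0), Some (0,1), Some (0,2), Some (1,0), Some (1,1), Some (1,2),
   Some (2,0), Some (2,1), Some (2,2)}"
  unfolding G2_def by auto

lemma G2_ok: "monoid_ok G2"
  unfolding monoid_ok_def G2_carrier G2_mul G2_unit
  by simp



definition blocks :: "nat list \<Rightarrow> nat list \<Rightarrow> nat list" where
  "blocks es xs = concat (map (\<lambda>(e, x). replicate e x) (zip es xs))"

definition sorted01 :: "word \<Rightarrow> bool" where
  "sorted01 w \<longleftrightarrow> set w \<subseteq> {0, 1} \<and> sorted w"

definition cap :: "word \<Rightarrow> nat \<times> nat" where
  "cap w = (min 2 (count_list w 0), min 2 (count_list w 1))"

lemma count_list_replicate: "count_list (replicate n y) x = (if x = y then n else 0)"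
  by (induction n) auto

lemma blocks_Cons: "blocks (e # es) (x # xs) = replicate e x @ blocks es xs"
  by (simp add: blocks_def)

lemma blocks_set:
  "length es = length xs \<Longrightarrow> \<forall>e\<in>set es. 1 \<le> e \<Longrightarrow> set (blocks es xs) = set xs"
proof (induction xs arbitrary: es)
  case Nil
  then show ?case by (simp add: blocks_def)
next
  case (Cons x xs)
  then obtain e es' where es: "es = e # es'" by (cases es) auto
  then show ?case using Cons by (auto simp: blocks_Cons)
qed

lemma blocks_sorted:
  "length es = length xs \<Longrightarrow> \<forall>e\<in>set es. 1 \<le> e \<Longrightarrow> sorted (blocks es xs) = sorted xs"
proof (induction xs arbitrary: es)
  case Nil
  then show ?case by (simp add: blocks_def)
next
  case (Cons x xs)
  then obtain e es' where es: "es = e # es'" by (cases es) auto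
  have e: "1 \<le> e" and l: "length es' = length xs" and p: "\<forall>e\<in>set es'. 1 \<le> e" using Cons es by auto
  have st: "set (blocks es' xs) = set xs" using blocks_set[OF l p] .
  have "sorted (blocks es (x # xs)) = (sorted (blocks es' xs) \<and> (\<forall>b\<in>set xs. x \<le> b))"
    using e by (auto simp: es blocks_Cons sorted_append st)
  then show ?case using Cons.IH[OF l p] by auto
qed

lemma blocks_ones: "blocks (replicate (length u) 1) u = u"
  by (induction u) (auto simp: blocks_Cons blocks_def)

lemma gamma_refl: "gamma u u"
  unfolding gamma_def
  apply (rule conjI, simp)
  apply (rule exI[of _ u], rule exI[of _ "replicate (length u) 1"], rule exI[of _ "replicate (length u) 1"])
  using blocks_ones[of u] unfolding blocks_def by auto

lemma gamma_D:
  assumes "gamma u v"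
  obtains xs es fs where "length es = length xs" "length fs = length xs" "\<forall>e\<in>set es. 1 \<le> e"
    "\<forall>f\<in>set fs. 1 \<le> f" "u = blocks es xs" "v = blocks fs xs"
  using assms unfolding gamma_def blocks_def by blast

lemma gamma_set: "gamma u v \<Longrightarrow> set u = set v \<and> simple_letters u = simple_letters v"
proof -
  assume g: "gamma u v"
  then obtain xs es fs where h: "length es = length xs" "length fs = length xs" "\<forall>e\<in>set es. 1 \<le> e"
    "\<forall>f\<in>set fs. 1 \<le> f" "u = blocks es xs" "v = blocks fs xs" by (rule gamma_D)
  then show ?thesis using blocks_set g unfolding gamma_def by metis
qed

lemma gamma_sorted01: "gamma u v \<Longrightarrow> sorted01 u \<Longrightarrow> sorted01 v"
proof -
  assume g: "gamma u v" and s: "sorted01 u"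
  from g obtain xs es fs where h: "length es = length xs" "length fs = length xs" "\<forall>e\<in>set es. 1 \<le> e"
    "\<forall>f\<in>set fs. 1 \<le> f" "u = blocks es xs" "v = blocks fs xs" by (rule gamma_D)
  have "sorted xs" using blocks_sorted[OF h(1) h(3)] s h(5) unfolding sorted01_def by simp
  then have "sorted v" using blocks_sorted[OF h(2) h(4)] h(6) by simp
  moreover have "set v = set u" using gamma_set[OF g] by simp
  ultimately show ?thesis using s unfolding sorted01_def by simp
qed

lemma min2_eq:
  assumes "(a = 0) = (b = 0)" "(a = 1) = (b = (1::nat))"
  shows "min 2 a = min 2 b"
  using assms unfolding min_def by presburger

lemma cap_eq: "set u = set v \<Longrightarrow> simple_letters u = simple_letters v \<Longrightarrow> cap u = cap v"
proof -
  assume s: "set u = set v" and t: "simple_letters u = simple_letters v"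
  have z: "(count_list u x = 0) = (count_list v x = 0)" for x
    using s by (simp add: count_list_0_iff)
  have o: "(count_list u x = 1) = (count_list v x = 1)" for x
  proof -
    have "x \<in> simple_letters u \<longleftrightarrow> x \<in> simple_letters v" using t by simp
    then show ?thesis unfolding simple_letters_def by simp
  qed
  have "min 2 (count_list u x) = min 2 (count_list v x)" for x using min2_eq[OF z o] .
  then show ?thesis unfolding cap_def by simp
qed

lemma gamma_cap: "gamma u v \<Longrightarrow> cap u = cap v"
  using gamma_set cap_eq by blast

lemma rep01: "sorted01 w \<Longrightarrow> w = replicate (count_list w 0) 0 @ replicate (count_list w 1) 1"
proof (induction w)
  case Nil
  then show ?case by simp
next
  case (Cons a w)
  have sw: "sorted01 w" using Cons.prems unfolding sorted01_def by auto
  have a01: "a = 0 \<or> a = 1" using Cons.prems unfolding sorted01_def by auto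
  show ?case
  proof (cases "a = 0")
    case True
    then show ?thesis using Cons.IH[OF sw] by simp
  next
    case False
    then have a1: "a = 1" using a01 by simp
    have "\<forall>b\<in>set w. 1 \<le> b" using Cons.prems a1 unfolding sorted01_def by auto
    then have "0 \<notin> set w" by auto
    then have "count_list w 0 = 0" by (simp add: count_list_0_iff)
    then show ?thesis using Cons.IH[OF sw] a1 by simp
  qed
qed

lemma simple_rep: "simple_letters (replicate a 0 @ replicate b 1) = {x. (x = 0 \<and> a = 1) \<or> (x = 1 \<and> b = 1)}"
proof -
  have "count_list (replicate a 0 @ replicate b 1) x = (if x = 0 then a else if x = 1 then b else 0)" for x :: nat
    by (simp add: count_list_replicate)
  then show ?thesis unfolding simple_letters_def by auto
qed

lemma gamma_of_cap:
  assumes su: "sorted01 u" and sv: "sorted01 v" and c: "cap u = cap v"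
  shows "gamma u v"
proof -
  define a b c' d where "a = count_list u 0" "b = count_list u 1" "c' = count_list v 0" "d = count_list v 1"
  have u: "u = replicate a 0 @ replicate b 1" using rep01[OF su] a_b_c'_d_def by simp
  have v: "v = replicate c' 0 @ replicate d 1" using rep01[OF sv] a_b_c'_d_def by simp
  have m1: "min 2 a = min 2 c'" and m2: "min 2 b = min 2 d" using c a_b_c'_d_def unfolding cap_def by auto
  have sl: "simple_letters u = simple_letters v"
    unfolding u v simple_rep using m1 m2 by (auto simp: min_def split: if_splits)
  have bl: "\<exists>xs es fs. length es = length xs \<and> length fs = length xs \<and>
        (\<forall>e\<in>set es. 1 \<le> e) \<and> (\<forall>f\<in>set fs. 1 \<le> f) \<and>
        u = concat (map (\<lambda>(e, x). replicate e x) (zip es xs)) \<and>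
        v = concat (map (\<lambda>(f, x). replicate f x) (zip fs xs))"
  proof (cases "a = 0")
    case True
    then have c0: "c' = 0" using m1 by (auto simp: min_def split: if_splits)
    show ?thesis
    proof (cases "b = 0")
      case True
      then have "d = 0" using m2 by (auto simp: min_def split: if_splits)
      then show ?thesis using \<open>a = 0\<close> c0 True u v by (intro exI[of _ "[]"]) simp
    next
      case False
      then have "d \<noteq> 0" using m2 by (auto simp: min_def split: if_splits)
      then show ?thesis using \<open>a = 0\<close> c0 False u v
        by (intro exI[of _ "[1]"] exI[of _ "[b]"] exI[of _ "[d]"]) simp
    qed
  next
    case False
    then have c0: "c' \<noteq> 0" using m1 by (auto simp: min_def split: if_splits)
    show ?thesis
    proof (cases "b = 0")
      case True
      then have "d = 0" using m2 by (auto simp: min_def split: if_splits)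
      then show ?thesis using \<open>a \<noteq> 0\<close> c0 True u v
        by (intro exI[of _ "[0]"] exI[of _ "[a]"] exI[of _ "[c']"]) simp
    next
      case False
      then have "d \<noteq> 0" using m2 by (auto simp: min_def split: if_splits)
      then show ?thesis using \<open>a \<noteq> 0\<close> c0 False u v
        by (intro exI[of _ "[0,1]"] exI[of _ "[a,b]"] exI[of _ "[c',d]"]) simp
    qed
  qed
  show ?thesis unfolding gamma_def using sl bl by blast
qed

lemma gclass_sorted: "sorted01 u \<Longrightarrow> gclass u = {v. sorted01 v \<and> cap v = cap u}"
proof (rule set_eqI)
  fix v assume su: "sorted01 u"
  show "v \<in> gclass u \<longleftrightarrow> v \<in> {v. sorted01 v \<and> cap v = cap u}"
  proof
    assume "v \<in> gclass u"
    then have g: "gamma u v" unfolding gclass_def by simp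
    show "v \<in> {v. sorted01 v \<and> cap v = cap u}"
      using gamma_sorted01[OF g su] gamma_cap[OF g] by simp
  next
    assume "v \<in> {v. sorted01 v \<and> cap v = cap u}"
    then have "sorted01 v" "cap u = cap v" by auto
    then show "v \<in> gclass u" unfolding gclass_def using gamma_of_cap[OF su] by simp
  qed
qed

lemma sorted01_append_iff: "sorted01 (x @ y) \<longleftrightarrow> sorted01 x \<and> sorted01 y \<and> (count_list x 1 = 0 \<or> count_list y 0 = 0)"
proof -
  have k: "(\<forall>a\<in>set x. \<forall>b\<in>set y. a \<le> b) \<longleftrightarrow> (1 \<notin> set x \<or> 0 \<notin> set y)"
    if sx: "set x \<subseteq> {0,1}" and sy: "set y \<subseteq> {0,1}"
  proof
    assume "\<forall>a\<in>set x. \<forall>b\<in>set y. a \<le> b"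
    then show "1 \<notin> set x \<or> 0 \<notin> set y" by fastforce
  next
    assume h: "1 \<notin> set x \<or> 0 \<notin> set y"
    show "\<forall>a\<in>set x. \<forall>b\<in>set y. a \<le> b"
    proof (intro ballI)
      fix a b assume a: "a \<in> set x" and b: "b \<in> set y"
      have "a = 0 \<or> a = 1" "b = 0 \<or> b = 1" using a b sx sy by auto
      then show "a \<le> b" using h a b by auto
    qed
  qed
  show ?thesis
  proof (cases "set x \<subseteq> {0,1} \<and> set y \<subseteq> {0,1}")
    case True
    then show ?thesis unfolding sorted01_def sorted_append using k[of] by (simp add: count_list_0_iff)
  next
    case False
    then show ?thesis unfolding sorted01_def by auto
  qed
qed

lemma gle_iff: "gle w [0,0,1,1] \<longleftrightarrow> sorted01 w"
proof
  assume "gle w [0,0,1,1]"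
  then obtain p s where e: "gclass [0,0,1,1] = gclass (p @ w @ s)" unfolding gle_def by blast
  have "p @ w @ s \<in> gclass (p @ w @ s)" unfolding gclass_def using gamma_refl by simp
  then have "p @ w @ s \<in> gclass [0,0,1,1]" using e by simp
  then have "gamma [0,0,1,1] (p @ w @ s)" unfolding gclass_def by simp
  then have "sorted01 (p @ w @ s)" by (rule gamma_sorted01) (simp add: sorted01_def)
  then show "sorted01 w" using sorted01_append_iff by simp
next
  assume s: "sorted01 w"
  have s2: "sorted01 ([0,0] @ w @ [1,1])" using s unfolding sorted01_append_iff
    by (simp add: sorted01_def)
  have "cap ([0,0] @ w @ [1,1]) = cap [0,0,1,1]" unfolding cap_def by simp
  then have "gclass [0,0,1,1] = gclass ([0,0] @ w @ [1,1])"
    using gclass_sorted[OF s2] gclass_sorted[of "[0,0,1,1]"] by (simp add: sorted01_def)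
  then show "gle w [0,0,1,1]" unfolding gle_def by blast
qed

definition Mg :: "word set option monoid_str" where "Mg = M_gamma_xxyy"

lemma Mg_carrier: "fst M_gamma_xxyy = {None} \<union> Some ` {gclass w | w. sorted01 w}"
  unfolding M_gamma_xxyy_def M_gamma_def using gle_iff by auto

lemma some_gclass: "sorted01 u \<Longrightarrow> (SOME x. x \<in> gclass u) \<in> gclass u"
  by (rule someI[of _ u]) (simp add: gclass_def gamma_refl)

lemma min2_add: "min 2 (a + b) = min 2 (min 2 a + min (2::nat) b)"
  by (simp add: min_def)

lemma cap_append: "cap (x @ y) = (min 2 (fst (cap x) + fst (cap y)), min 2 (snd (cap x) + snd (cap y)))"
  unfolding cap_def using min2_add by simp

lemma Mg_mul:
  assumes su: "sorted01 u" and sv: "sorted01 v"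
  shows "mmul M_gamma_xxyy (Some (gclass u)) (Some (gclass v)) =
     (if sorted01 (u @ v) then Some (gclass (u @ v)) else None)"
proof -
  define x where "x = (SOME x. x \<in> gclass u)"
  define y where "y = (SOME y. y \<in> gclass v)"
  have x: "sorted01 x" "cap x = cap u" using some_gclass[OF su] gclass_sorted[OF su] x_def by auto
  have y: "sorted01 y" "cap y = cap v" using some_gclass[OF sv] gclass_sorted[OF sv] y_def by auto
  have z: "(count_list w a = 0) \<longleftrightarrow> min 2 (count_list w a) = 0" for w a by auto
  have iff: "sorted01 (x @ y) \<longleftrightarrow> sorted01 (u @ v)"
    using x y su sv unfolding sorted01_append_iff cap_def by (metis z prod.inject)
  have capxy: "cap (x @ y) = cap (u @ v)" using x y cap_append by simp
  have m: "mmul M_gamma_xxyy (Some (gclass u)) (Some (gclass v)) =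
     (if gle (x @ y) [0,0,1,1] then Some (gclass (x @ y)) else None)"
    unfolding M_gamma_xxyy_def M_gamma_def mmul_def x_def y_def by (simp add: Let_def)
  show ?thesis
  proof (cases "sorted01 (u @ v)")
    case True
    then have "gclass (x @ y) = gclass (u @ v)" using iff capxy gclass_sorted by simp
    then show ?thesis using m True iff gle_iff by simp
  next
    case False
    then show ?thesis using m iff gle_iff by simp
  qed
qed

definition hg :: "word set option \<Rightarrow> (nat \<times> nat) option" where
  "hg a = map_option (\<lambda>A. cap (SOME x. x \<in> A)) a"

lemma hg_None: "hg None = None" by (simp add: hg_def)

lemma hg_gclass: "sorted01 u \<Longrightarrow> hg (Some (gclass u)) = Some (cap u)"
  unfolding hg_def using some_gclass gclass_sorted by fastforce

lemma Mg_None: "mmul M_gamma_xxyy None a = None" "mmul M_gamma_xxyy a None = None"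
  unfolding M_gamma_xxyy_def M_gamma_def mmul_def by (auto split: option.splits)

lemma Mg_unit: "munit M_gamma_xxyy = Some (gclass [])"
  unfolding M_gamma_xxyy_def M_gamma_def munit_def by simp

lemma cap_le: "fst (cap w) \<in> {0,1,2} \<and> snd (cap w) \<in> {0,1,2}"
  unfolding cap_def by (auto simp: min_def)

lemma sat_Mg_G2: "sat M_gamma_xxyy u v \<Longrightarrow> sat G2 u v"
proof (rule sat_hom[where h = hg])
  have "sorted01 []" by (simp add: sorted01_def)
  then show "munit M_gamma_xxyy \<in> fst M_gamma_xxyy" unfolding Mg_unit Mg_carrier
    by blast
  show "\<forall>a\<in>fst M_gamma_xxyy. \<forall>b\<in>fst M_gamma_xxyy. mmul M_gamma_xxyy a b \<in> fst M_gamma_xxyy"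
    unfolding Mg_carrier using Mg_mul Mg_None by auto blast
  show "\<forall>a\<in>fst M_gamma_xxyy. \<forall>b\<in>fst M_gamma_xxyy. hg (mmul M_gamma_xxyy a b) = mmul G2 (hg a) (hg b)"
  proof (intro ballI)
    fix a b assume a: "a \<in> fst M_gamma_xxyy" and b: "b \<in> fst M_gamma_xxyy"
    show "hg (mmul M_gamma_xxyy a b) = mmul G2 (hg a) (hg b)"
    proof (cases "a = None \<or> b = None")
      case True
      then show ?thesis using Mg_None by (auto simp: hg_def G2_mul split: option.splits)
    next
      case False
      then obtain u v where u: "a = Some (gclass u)" "sorted01 u" and v: "b = Some (gclass v)" "sorted01 v"
        using a b unfolding Mg_carrier by auto
      have z: "(count_list w k = 0) \<longleftrightarrow> min 2 (count_list w k) = 0" for w k by auto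
      have iff: "sorted01 (u @ v) \<longleftrightarrow> (snd (cap u) = 0 \<or> fst (cap v) = 0)"
        using u v unfolding sorted01_append_iff cap_def using z by auto
      show ?thesis
        unfolding u v Mg_mul[OF u(2) v(2)] hg_gclass[OF u(2)] hg_gclass[OF v(2)]
        using iff hg_gclass cap_append[of u v]
        by (cases "cap u", cases "cap v") (auto simp: G2_mul hg_None)
    qed
  qed
  show "hg (munit M_gamma_xxyy) = munit G2"
    unfolding Mg_unit G2_unit using hg_gclass[of "[]"] by (simp add: sorted01_def cap_def)
  show "\<forall>b\<in>fst G2. \<exists>a\<in>fst M_gamma_xxyy. hg a = b"
  proof
    fix b assume b: "b \<in> fst G2"
    show "\<exists>a\<in>fst M_gamma_xxyy. hg a = b"
    proof (cases b)
      case None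
      then show ?thesis unfolding Mg_carrier by (auto simp: hg_def)
    next
      case (Some p)
      then obtain i j where p: "b = Some (i, j)" "i \<le> 2" "j \<le> 2" using b unfolding G2_def by auto
      define w where "w = replicate i 0 @ replicate j (1::nat)"
      have sw: "sorted01 w" unfolding w_def sorted01_def by (auto simp: sorted_append)
      have "cap w = (i, j)" unfolding w_def cap_def using p by (simp add: count_list_replicate)
      then show ?thesis using sw hg_gclass[OF sw] p unfolding Mg_carrier by auto
    qed
  qed
qed



definition coll :: "'a option \<times> 'b option \<Rightarrow> 'a option \<times> 'b option" where
  "coll p = (if fst p = None \<or> snd p = None then (None, None) else p)"

definition cprod :: "'a option monoid_str \<Rightarrow> 'b option monoid_str \<Rightarrow> ('a option \<times> 'b option) set
    \<Rightarrow> ('a option \<times> 'b option) monoid_str" where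
  "cprod M1 M2 C = (C, (\<lambda>a b. coll (mmul M1 (fst a) (fst b), mmul M2 (snd a) (snd b))), (munit M1, munit M2))"

definition zabs :: "'a option monoid_str \<Rightarrow> bool" where
  "zabs M \<longleftrightarrow> (\<forall>x. mmul M None x = None \<and> mmul M x None = None)"

lemma cprod_mul: "mmul (cprod M1 M2 C) a b = coll (mmul M1 (fst a) (fst b), mmul M2 (snd a) (snd b))"
  unfolding cprod_def mmul_def by simp

lemma cprod_unit: "munit (cprod M1 M2 C) = (munit M1, munit M2)"
  unfolding cprod_def munit_def by simp

lemma cprod_carrier: "fst (cprod M1 M2 C) = C"
  unfolding cprod_def by simp

lemma coll_mul_left:
  assumes "zabs M1" "zabs M2"
  shows "coll (mmul M1 (fst (coll p)) x, mmul M2 (snd (coll p)) y) = coll (mmul M1 (fst p) x, mmul M2 (snd p) y)"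
  using assms unfolding coll_def zabs_def by (cases p) auto

lemma coll_mul_right:
  assumes "zabs M1" "zabs M2"
  shows "coll (mmul M1 x (fst (coll p)), mmul M2 y (snd (coll p))) = coll (mmul M1 x (fst p), mmul M2 y (snd p))"
  using assms unfolding coll_def zabs_def by (cases p) auto

lemma eval_cprod:
  assumes z: "zabs M1" "zabs M2" and u: "munit M1 \<noteq> None" "munit M2 \<noteq> None"
  shows "eval_word (cprod M1 M2 C) \<phi> w = coll (eval_word M1 (\<lambda>i. fst (\<phi> i)) w, eval_word M2 (\<lambda>i. snd (\<phi> i)) w)"
proof (induction w)
  case Nil
  then show ?case using u by (auto simp: cprod_unit coll_def)
next
  case (Cons a w)
  show ?case unfolding eval_Cons Cons cprod_mul using coll_mul_right[OF z] by simp
qed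

lemma sat_cprod:
  assumes z: "zabs M1" "zabs M2" and u: "munit M1 \<noteq> None" "munit M2 \<noteq> None"
    and C: "C \<subseteq> fst M1 \<times> fst M2" and s1: "sat M1 u v" and s2: "sat M2 u v"
  shows "sat (cprod M1 M2 C) u v"
  unfolding sat_def
proof (intro allI impI)
  fix \<phi> :: "nat \<Rightarrow> _" assume ph: "\<forall>i. \<phi> i \<in> fst (cprod M1 M2 C)"
  have "\<phi> i \<in> fst M1 \<times> fst M2" for i using ph C unfolding cprod_carrier by auto
  then have "\<forall>i. fst (\<phi> i) \<in> fst M1" "\<forall>i. snd (\<phi> i) \<in> fst M2" by (auto simp: mem_Times_iff)
  then show "eval_word (cprod M1 M2 C) \<phi> u = eval_word (cprod M1 M2 C) \<phi> v"
    unfolding eval_cprod[OF z u] using s1 s2 unfolding sat_def by simp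
qed

lemma cprod_ok:
  assumes ok: "monoid_ok M1" "monoid_ok M2" and z: "zabs M1" "zabs M2"
    and C: "C \<subseteq> fst M1 \<times> fst M2" and uC: "(munit M1, munit M2) \<in> C"
    and clo: "\<forall>a\<in>C. \<forall>b\<in>C. coll (mmul M1 (fst a) (fst b), mmul M2 (snd a) (snd b)) \<in> C"
    and fx: "\<forall>a\<in>C. coll a = a"
  shows "monoid_ok (cprod M1 M2 C)"
proof -
  have A1: "\<forall>a\<in>fst M1. \<forall>b\<in>fst M1. \<forall>c\<in>fst M1. mmul M1 (mmul M1 a b) c = mmul M1 a (mmul M1 b c)"
    using ok(1) unfolding monoid_ok_def by blast
  have A2: "\<forall>a\<in>fst M2. \<forall>b\<in>fst M2. \<forall>c\<in>fst M2. mmul M2 (mmul M2 a b) c = mmul M2 a (mmul M2 b c)"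
    using ok(2) unfolding monoid_ok_def by blast
  have U1: "\<forall>a\<in>fst M1. mmul M1 (munit M1) a = a \<and> mmul M1 a (munit M1) = a"
    using ok(1) unfolding monoid_ok_def by blast
  have U2: "\<forall>a\<in>fst M2. mmul M2 (munit M2) a = a \<and> mmul M2 a (munit M2) = a"
    using ok(2) unfolding monoid_ok_def by blast
  have assoc: "mmul (cprod M1 M2 C) (mmul (cprod M1 M2 C) a b) c = mmul (cprod M1 M2 C) a (mmul (cprod M1 M2 C) b c)"
    if "a \<in> C" "b \<in> C" "c \<in> C" for a b c
  proof -
    have m: "fst a \<in> fst M1" "fst b \<in> fst M1" "fst c \<in> fst M1" "snd a \<in> fst M2" "snd b \<in> fst M2" "snd c \<in> fst M2"
      using that C by auto
    show ?thesis unfolding cprod_mul coll_mul_left[OF z] coll_mul_right[OF z]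
      using A1 A2 m by simp
  qed
  have unit: "mmul (cprod M1 M2 C) (munit (cprod M1 M2 C)) a = a \<and> mmul (cprod M1 M2 C) a (munit (cprod M1 M2 C)) = a"
    if "a \<in> C" for a
  proof -
    have m: "fst a \<in> fst M1" "snd a \<in> fst M2" using that C by auto
    show ?thesis unfolding cprod_mul cprod_unit using U1 U2 m fx that by simp
  qed
  show ?thesis unfolding monoid_ok_def cprod_carrier
    using uC clo assoc unit by (simp add: cprod_mul cprod_unit)
qed

definition CN :: "(word option \<times> (nat \<times> nat) option) set" where
  "CN = {(None, None),
    (Some [], Some (0,0)), (Some [], Some (0,2)),
    (Some [0], Some (2,0)), (Some [0], Some (2,2)),
    (Some [1], Some (0,0)), (Some [1], Some (0,2)),
    (Some [0,1], Some (2,0)), (Some [0,1], Some (2,2)),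
    (Some [1,0], Some (2,0)), (Some [1,0], Some (2,2)),
    (Some [0,1,0], Some (2,0)), (Some [0,1,0], Some (2,2))}"

definition NN :: "(word option \<times> (nat \<times> nat) option) monoid_str" where
  "NN = cprod M_xyx G2 CN"

lemma zabs_Mxyx: "zabs M_xyx" unfolding zabs_def Mxyx_mul by (auto split: option.splits)
lemma zabs_G2: "zabs G2" unfolding zabs_def G2_mul by (auto split: option.splits)

lemma CN_sub: "CN \<subseteq> fst M_xyx \<times> fst G2"
  unfolding CN_def Mxyx_carrier G2_carrier by simp

lemma CN_closed: "\<forall>a\<in>CN. \<forall>b\<in>CN. coll (mmul M_xyx (fst a) (fst b), mmul G2 (snd a) (snd b)) \<in> CN"
  unfolding CN_def Mxyx_mul G2_mul coll_def by simp

lemma NN_ok: "monoid_ok NN"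
  unfolding NN_def
  apply (rule cprod_ok[OF Mxyx_ok G2_ok zabs_Mxyx zabs_G2 CN_sub _ CN_closed])
  unfolding CN_def Mxyx_unit G2_unit coll_def by simp_all

lemma sat_NN: "sat M_xyx u v \<Longrightarrow> sat G2 u v \<Longrightarrow> sat NN u v"
  unfolding NN_def by (rule sat_cprod[OF zabs_Mxyx zabs_G2 _ _ CN_sub]) (simp_all add: Mxyx_unit G2_unit)



lemma sat_enum3:
  assumes "set u \<union> set v \<subseteq> {0,1,2}"
    and "\<forall>a\<in>fst M. \<forall>b\<in>fst M. \<forall>c\<in>fst M.
      eval_word M (\<lambda>i. if i = 0 then a else if i = 1 then b else c) u =
      eval_word M (\<lambda>i. if i = 0 then a else if i = 1 then b else c) v"
  shows "sat M u v"
  unfolding sat_def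
proof (intro allI impI)
  fix \<phi> :: "nat \<Rightarrow> _" assume ph: "\<forall>i. \<phi> i \<in> fst M"
  define \<psi> where "\<psi> = (\<lambda>i::nat. if i = 0 then \<phi> 0 else if i = 1 then \<phi> 1 else \<phi> 2)"
  have "eval_word M \<phi> u = eval_word M \<psi> u"
    by (rule eval_cong) (use assms(1) in \<open>auto simp: \<psi>_def\<close>)
  moreover have "eval_word M \<phi> v = eval_word M \<psi> v"
    by (rule eval_cong) (use assms(1) in \<open>auto simp: \<psi>_def\<close>)
  moreover have "eval_word M \<psi> u = eval_word M \<psi> v"
    using assms(2) ph unfolding \<psi>_def by blast
  ultimately show "eval_word M \<phi> u = eval_word M \<phi> v" by simp
qed

lemma sat_enum2:
  assumes "set u \<union> set v \<subseteq> {0,1}"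
    and "\<forall>a\<in>fst M. \<forall>b\<in>fst M.
      eval_word M (\<lambda>i. if i = 0 then a else b) u =
      eval_word M (\<lambda>i. if i = 0 then a else b) v"
  shows "sat M u v"
  unfolding sat_def
proof (intro allI impI)
  fix \<phi> :: "nat \<Rightarrow> _" assume ph: "\<forall>i. \<phi> i \<in> fst M"
  define \<psi> where "\<psi> = (\<lambda>i::nat. if i = 0 then \<phi> 0 else \<phi> 1)"
  have "eval_word M \<phi> u = eval_word M \<psi> u"
    by (rule eval_cong) (use assms(1) in \<open>auto simp: \<psi>_def\<close>)
  moreover have "eval_word M \<phi> v = eval_word M \<psi> v"
    by (rule eval_cong) (use assms(1) in \<open>auto simp: \<psi>_def\<close>)
  moreover have "eval_word M \<psi> u = eval_word M \<psi> v"
    using assms(2) ph unfolding \<psi>_def by blast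
  ultimately show "eval_word M \<phi> u = eval_word M \<phi> v" by simp
qed

lemma sigma_Mxyx: "sat M_xyx [0,1,0,2,2] [0,1,2,0,2]"
  by (rule sat_enum3) (simp_all add: Mxyx_carrier Mxyx_mul Mxyx_unit)

lemma tau_Mxyx: "sat M_xyx [0,0,1] [0,0,1,0]"
  by (rule sat_enum2) (simp_all add: Mxyx_carrier Mxyx_mul Mxyx_unit)

lemma NN_carrier: "fst NN = CN" unfolding NN_def cprod_carrier ..
lemma NN_mul: "mmul NN a b = coll (mmul M_xyx (fst a) (fst b), mmul G2 (snd a) (snd b))"
  unfolding NN_def cprod_mul ..
lemma NN_unit: "munit NN = (Some [], Some (0,0))"
  unfolding NN_def cprod_unit Mxyx_unit G2_unit ..

lemma tau_NN: "sat NN [0,0,1] [0,0,1,0]"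
  by (rule sat_enum2) (simp_all add: NN_carrier CN_def NN_mul NN_unit Mxyx_mul G2_mul coll_def)

lemma beta1: "sat G2 [0,1,0,2,2] [0,1,0,0,2,2]"
  by (rule sat_enum3) (simp_all add: G2_carrier G2_mul G2_unit)

lemma beta2: "sat G2 [0,1,0,0,2,2,0] [0,1,2,0,2]"
  by (rule sat_enum3) (simp_all add: G2_carrier G2_mul G2_unit)

lemma sigma_not_NN: "\<not> sat NN [0,1,0,2,2] [0,1,2,0,2]"
proof
  assume s: "sat NN [0,1,0,2,2] [0,1,2,0,2]"
  define \<phi> :: "nat \<Rightarrow> word option \<times> (nat \<times> nat) option" where
    "\<phi> = (\<lambda>i. if i = 0 then (Some [0], Some (2,0)) else if i = 1 then (Some [1], Some (0,0))
           else (Some [], Some (0,2)))"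
  have "\<forall>i. \<phi> i \<in> fst NN" unfolding NN_carrier CN_def \<phi>_def by simp
  then have "eval_word NN \<phi> [0,1,0,2,2] = eval_word NN \<phi> [0,1,2,0,2]" using s unfolding sat_def by blast
  moreover have "eval_word NN \<phi> [0,1,0,2,2] \<noteq> eval_word NN \<phi> [0,1,2,0,2]"
    by (simp add: \<phi>_def NN_mul NN_unit Mxyx_mul G2_mul coll_def)
  ultimately show False by simp
qed



theorem proposition5p1:
  shows "\<not> modular_on (subvarieties Id_join) var_le"
proof -
  define L where "L = subvarieties Id_join"
  define Ta where "Ta = identities M_xyx"
  define Tb where "Tb = identities G2"
  define TN where "TN = identities NN"
  define Tc where "Tc = Ta \<inter> TN"
  have eTa: "eq_theory Ta" unfolding Ta_def by (rule identities_eq_theory[OF Mxyx_ok])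
  have eTb: "eq_theory Tb" unfolding Tb_def by (rule identities_eq_theory[OF G2_ok])
  have eTN: "eq_theory TN" unfolding TN_def by (rule identities_eq_theory[OF NN_ok])
  have eTc: "eq_theory Tc" unfolding Tc_def by (rule eq_theory_Int[OF eTa eTN])
  have IA: "Id_join \<subseteq> Ta" unfolding Id_join_def Ta_def by auto
  have IB: "Id_join \<subseteq> Tb" unfolding Id_join_def Tb_def identities_def using sat_Mg_G2 by auto
  have abN: "Ta \<inter> Tb \<subseteq> TN" unfolding Ta_def Tb_def TN_def identities_def using sat_NN by auto
  have IN: "Id_join \<subseteq> TN" using IA IB abN by auto
  have IC: "Id_join \<subseteq> Tc" unfolding Tc_def using IA IN by auto
  have inL: "T \<in> L \<longleftrightarrow> eq_theory T \<and> Id_join \<subseteq> T" for T unfolding L_def subvarieties_def by simp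
  have aL: "Ta \<in> L" and bL: "Tb \<in> L" and cL: "Tc \<in> L" using eTa eTb eTc IA IB IC inL by auto
  have ac: "var_le Ta Tc" unfolding var_le_def Tc_def by auto
  define m where "m = cl (Tb \<union> Tc)"
  define j where "j = Ta \<inter> m"
  define j' where "j' = Ta \<inter> Tb"
  define m' where "m' = cl (j' \<union> Tc)"
  have em: "eq_theory m" unfolding m_def by (rule cl_eq)
  have em': "eq_theory m'" unfolding m'_def by (rule cl_eq)
  have mL: "m \<in> L" using inL em IB cl_sup[of "Tb \<union> Tc"] unfolding m_def by auto
  have jL: "j \<in> L" using inL eq_theory_Int[OF eTa em] IA mL unfolding j_def by auto
  have j'L: "j' \<in> L" using inL eq_theory_Int[OF eTa eTb] IA IB unfolding j'_def by auto
  have m'L: "m' \<in> L" using inL em' IC cl_sup[of "j' \<union> Tc"] unfolding m'_def by auto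
  have g1: "is_glb_in L var_le Tb Tc m"
    unfolding is_glb_in_def var_le_def using mL cl_sup[of "Tb \<union> Tc"] cl_least[of _ "Tb \<union> Tc"] inL
    unfolding m_def by auto
  have l1: "is_lub_in L var_le Ta m j"
    unfolding is_lub_in_def var_le_def using jL unfolding j_def by auto
  have l2: "is_lub_in L var_le Ta Tb j'"
    unfolding is_lub_in_def var_le_def using j'L unfolding j'_def by auto
  have g2: "is_glb_in L var_le j' Tc m'"
    unfolding is_glb_in_def var_le_def using m'L cl_sup[of "j' \<union> Tc"] cl_least[of _ "j' \<union> Tc"] inL
    unfolding m'_def by auto
  have m'N: "m' \<subseteq> TN" unfolding m'_def
    by (rule cl_least[OF eTN]) (use abN in \<open>auto simp: j'_def Tc_def\<close>)
  have sN: "([0,1,0,2,2], [0,1,2,0,2]) \<notin> TN" unfolding TN_def identities_def using sigma_not_NN by simp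
  have sA: "([0,1,0,2,2], [0,1,2,0,2]) \<in> Ta" unfolding Ta_def identities_def using sigma_Mxyx by simp
  have b1: "([0,1,0,2,2], [0,1,0,0,2,2]) \<in> m"
    using beta1 cl_sup[of "Tb \<union> Tc"] unfolding m_def Tb_def identities_def by auto
  have b2: "([0,1,0,0,2,2,0], [0,1,2,0,2]) \<in> m"
    using beta2 cl_sup[of "Tb \<union> Tc"] unfolding m_def Tb_def identities_def by auto
  have tc: "([0,0,1], [0,0,1,0]) \<in> Tc" unfolding Tc_def Ta_def TN_def identities_def
    using tau_Mxyx tau_NN by simp
  define s :: "nat \<Rightarrow> word" where "s = (\<lambda>i. if i = 1 then [2,2] else [i])"
  have "(subst s [0,0,1], subst s [0,0,1,0]) \<in> Tc" by (rule eqt_subst[OF eTc tc])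
  then have "([0,0,2,2], [0,0,2,2,0]) \<in> Tc" by (simp add: subst_def s_def)
  then have "([0,1] @ [0,0,2,2] @ [], [0,1] @ [0,0,2,2,0] @ []) \<in> Tc" by (rule eqt_ctx[OF eTc])
  then have "([0,1,0,0,2,2], [0,1,0,0,2,2,0]) \<in> Tc" by simp
  then have t2: "([0,1,0,0,2,2], [0,1,0,0,2,2,0]) \<in> m" using cl_sup[of "Tb \<union> Tc"] unfolding m_def by auto
  have sm: "([0,1,0,2,2], [0,1,2,0,2]) \<in> m" using eqt_trans[OF em eqt_trans[OF em b1 t2] b2] .
  have sj: "([0,1,0,2,2], [0,1,2,0,2]) \<in> j" unfolding j_def using sA sm by simp
  have ne: "j \<noteq> m'" using sj sN m'N by auto
  show ?thesis
    unfolding modular_on_def L_def[symmetric]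
    using aL bL cL ac g1 l1 l2 g2 ne by blast
qed

end
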